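(* Under Assumptions (A1), (A2), (A3), for every $\mu\in\mathbb{R}$ the function $H$ belongs to $C^{2}(\mathbb{R})$ and $$L_H:=\sup_{x\in\mathbb{R}}|H(x)+\mu|+\sup_{x\in\mathbb{R}}|H'(x)|+\sup_{x\in\mathbb{R}}|H''(x)|<\infty,$$ and $L_H$ does not depend on $\mu$. In particular $H$ and $H'$ are globally Lipschitz continuous with Lipschitz constants bounded by $L_H$, and $\sup_{x\in\mathbb{R}}|H(x)|\le L_H+|\mu|$.
   Context: Let $l<r$ be real numbers and $f,g:\mathbb{R}\to\mathbb{R}$. Assumption (A1): the restriction of $f$ to $[l,r]$ belongs to $C^{2}([l,r])$. Assumption (A2): the restriction of $g$ to $[l,r]$ belongs to $C^{3}([l,r])$, $g(x)>0$ for every $x\in(l,r)$, and for every $w_0\in(l,r)$ one has $\int_{w_0}^{l}\frac{1}{g(w)}\,dw=-\infty$ and $\int_{w_0}^{r}\frac{1}{g(w)}\,dw=+\infty$. Assumption (A3): the limits $\lim_{x\searrow l}f(x)/g(x)$ and $\lim_{x\nearrow r}f(x)/g(x)$ exist and are finite. Fix $w_0\in(l,r)$ and define $\Phi:(l,r)\to\mathbb{R}$, $\Phi(x)=\int_{w_0}^{x}\frac{1}{g(w)}\,dw$ (a bijection onto $\mathbb{R}$ under (A2)). For $\mu\in\mathbb{R}$ define, for $x\in\mathbb{R}$, $\tilde H(x)=\frac{f(\Phi^{-1}(x))}{g(\Phi^{-1}(x))}-\frac12 g'(\Phi^{-1}(x))$ and $H(x)=\tilde H(x)-\mu$. *)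

theory Defs
  imports "HOL-Analysis.Analysis"
begin

definition Ck_on_closed :: "nat \<Rightarrow> real \<Rightarrow> real \<Rightarrow> (real \<Rightarrow> real) \<Rightarrow> bool" where
  "Ck_on_closed k l r f \<longleftrightarrow>
     (\<exists>D :: nat \<Rightarrow> real \<Rightarrow> real.
        (\<forall>x\<in>{l..r}. D 0 x = f x) \<and>
        (\<forall>j<k. \<forall>x\<in>{l..r}. (D j has_real_derivative D (Suc j) x) (at x within {l..r})) \<and>
        continuous_on {l..r} (D k))"

definition Phi :: "(real \<Rightarrow> real) \<Rightarrow> real \<Rightarrow> real \<Rightarrow> real" where
  "Phi g w0 x = (if w0 \<le> x then integral {w0..x} (\<lambda>w. 1 / g w)
                 else - integral {x..w0} (\<lambda>w. 1 / g w))"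

definition Phi_inv :: "real \<Rightarrow> real \<Rightarrow> (real \<Rightarrow> real) \<Rightarrow> real \<Rightarrow> real \<Rightarrow> real" where
  "Phi_inv l r g w0 = inv_into {l<..<r} (Phi g w0)"

definition Htilde :: "real \<Rightarrow> real \<Rightarrow> (real \<Rightarrow> real) \<Rightarrow> (real \<Rightarrow> real) \<Rightarrow> real \<Rightarrow> real \<Rightarrow> real" where
  "Htilde l r f g w0 x =
     f (Phi_inv l r g w0 x) / g (Phi_inv l r g w0 x) - 1/2 * deriv g (Phi_inv l r g w0 x)"

end

theory Submission
  imports Defs
begin


lemma cont_bound:
  fixes h :: "real \<Rightarrow> real"
  assumes "continuous_on {a..b} h"
  shows "\<exists>B. \<forall>x\<in>{a..b}. \<bar>h x\<bar> \<le> B"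
proof -
  have "compact (h ` {a..b})" using assms compact_continuous_image by blast
  then have "bounded (h ` {a..b})" by (rule compact_imp_bounded)
  then show ?thesis unfolding bounded_real by auto
qed

lemma Ck_interior:
  assumes "Ck_on_closed k l r f"
  obtains D where "\<forall>x\<in>{l..r}. D 0 x = f x"
    "\<And>j x. j<k \<Longrightarrow> x\<in>{l<..<r} \<Longrightarrow> (D j has_real_derivative D (Suc j) x) (at x)"
    "\<And>j. j \<le> k \<Longrightarrow> continuous_on {l..r} (D j)"
    "\<And>j. j \<le> k \<Longrightarrow> \<exists>B. \<forall>x\<in>{l..r}. \<bar>D j x\<bar> \<le> B"
proof -
  obtain D where D0: "\<forall>x\<in>{l..r}. D 0 x = f x"
    and Dd: "\<forall>j<k. \<forall>x\<in>{l..r}. (D j has_real_derivative D (Suc j) x) (at x within {l..r})"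
    and Dk: "continuous_on {l..r} (D k)"
    using assms unfolding Ck_on_closed_def by blast
  have d2: "(D j has_real_derivative D (Suc j) x) (at x)" if "j<k" "x\<in>{l<..<r}" for j x
  proof -
    have "(D j has_real_derivative D (Suc j) x) (at x within {l<..<r})"
    proof (rule DERIV_subset)
      show "(D j has_real_derivative D (Suc j) x) (at x within {l..r})" using Dd that by auto
    qed auto
    then show ?thesis using at_within_open[OF that(2)] by simp
  qed
  have c: "continuous_on {l..r} (D j)" if "j \<le> k" for j
  proof (cases "j = k")
    case True then show ?thesis using Dk by simp
  next
    case False
    then have "j<k" using that by simp
    then show ?thesis using Dd unfolding continuous_on_eq_continuous_within
      by (meson DERIV_continuous)
  qed
  show ?thesis
    apply (rule that[OF D0 d2 c])
    using c cont_bound by auto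
qed


lemma bdd_open_interval:
  fixes q :: "real \<Rightarrow> real"
  assumes lr: "l < r" and cq: "continuous_on {l<..<r} q"
    and L: "(q \<longlongrightarrow> c1) (at_right l)" and R: "(q \<longlongrightarrow> c2) (at_left r)"
  shows "\<exists>B. \<forall>x\<in>{l<..<r}. \<bar>q x\<bar> \<le> B"
proof -
  have "eventually (\<lambda>x. dist (q x) c1 < 1) (at_right l)" using L by (simp add: tendsto_iff)
  then obtain b1 where b1: "b1 > l" "\<And>y. y > l \<Longrightarrow> y < b1 \<Longrightarrow> dist (q y) c1 < 1"
    unfolding eventually_at_right_field by blast
  have "eventually (\<lambda>x. dist (q x) c2 < 1) (at_left r)" using R by (simp add: tendsto_iff)
  then obtain b2 where b2: "b2 < r" "\<And>y. y > b2 \<Longrightarrow> y < r \<Longrightarrow> dist (q y) c2 < 1"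
    unfolding eventually_at_left_field by blast
  define m where "m = (l+r)/2"
  define a' where "a' = min b1 m"
  define b' where "b' = max b2 m"
  have sub: "{a'..b'} \<subseteq> {l<..<r}" using b1 b2 lr unfolding a'_def b'_def m_def by (auto simp: min_def max_def split: if_splits)
  obtain B0 where B0: "\<forall>x\<in>{a'..b'}. \<bar>q x\<bar> \<le> B0"
    using cont_bound[OF continuous_on_subset[OF cq sub]] by blast
  have "\<bar>q x\<bar> \<le> B0 + \<bar>c1\<bar> + \<bar>c2\<bar> + 1" if x: "x \<in> {l<..<r}" for x
  proof -
    consider "x < a'" | "x > b'" | "x \<in> {a'..b'}" by fastforce
    then show ?thesis
    proof cases
      case 1
      then have "dist (q x) c1 < 1" using b1 x unfolding a'_def by auto
      moreover have "0 \<le> B0" using B0 sub a'_def b'_def m_def by (smt (verit) atLeastAtMost_iff)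
      ultimately show ?thesis unfolding dist_real_def by linarith
    next
      case 2
      then have "dist (q x) c2 < 1" using b2 x unfolding b'_def by auto
      moreover have "0 \<le> B0" using B0 sub a'_def b'_def m_def by (smt (verit) atLeastAtMost_iff)
      ultimately show ?thesis unfolding dist_real_def by linarith
    next
      case 3
      then show ?thesis using B0 by force
    qed
  qed
  then show ?thesis by blast
qed

lemma Phi_eq:
  fixes a b x w0 :: real and h :: "real \<Rightarrow> real"
  assumes "a \<le> w0" "w0 \<le> b" "x \<in> {a..b}" "continuous_on {a..b} h"
  shows "(if w0 \<le> x then integral {w0..x} h else - integral {x..w0} h) = integral {a..x} h - integral {a..w0} h"
proof (cases "w0 \<le> x")
  case True
  have "continuous_on {a..x} h" apply (rule continuous_on_subset[OF assms(4)]) using assms by auto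
  then have "h integrable_on {a..x}" by (rule integrable_continuous_real)
  then have "integral {a..w0} h + integral {w0..x} h = integral {a..x} h"
    using Henstock_Kurzweil_Integration.integral_combine[where a=a and c=w0 and b=x and f=h] assms True by auto
  then show ?thesis using True by simp
next
  case False
  have "continuous_on {a..w0} h" apply (rule continuous_on_subset[OF assms(4)]) using assms by auto
  then have "h integrable_on {a..w0}" by (rule integrable_continuous_real)
  then have "integral {a..x} h + integral {x..w0} h = integral {a..w0} h"
    using Henstock_Kurzweil_Integration.integral_combine[where a=a and c=x and b=w0 and f=h] assms False by auto
  then show ?thesis using False by simp
qed

lemma Phi_deriv:
  assumes cg: "continuous_on {l<..<r} g" and pos: "\<forall>x\<in>{l<..<r}. g x > 0"
    and w0: "w0 \<in> {l<..<r}" and y: "y \<in> {l<..<r}"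
  shows "(Phi g w0 has_real_derivative 1 / g y) (at y)"
proof -
  define a where "a = (l + min y w0)/2"
  define b where "b = (r + max y w0)/2"
  have ab: "a < y" "y < b" "a \<le> w0" "w0 \<le> b" "{a..b} \<subseteq> {l<..<r}"
    using w0 y unfolding a_def b_def by auto
  have ch: "continuous_on {a..b} (\<lambda>w. 1 / g w)"
  proof -
    have "\<forall>w\<in>{a..b}. g w \<noteq> 0" using pos ab(5) by force
    then show ?thesis using continuous_on_subset[OF cg ab(5)]
      by (intro continuous_intros) auto
  qed
  have "((\<lambda>u. integral {a..u} (\<lambda>w. 1 / g w) - integral {a..w0} (\<lambda>w. 1 / g w)) has_real_derivative 1 / g y) (at y within {a..b})"
    using integral_has_real_derivative[OF ch, of y] ab by (auto intro!: derivative_eq_intros)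
  then have "((\<lambda>u. integral {a..u} (\<lambda>w. 1 / g w) - integral {a..w0} (\<lambda>w. 1 / g w)) has_real_derivative 1 / g y) (at y within {a<..<b})"
    by (rule DERIV_subset) auto
  then have d: "((\<lambda>u. integral {a..u} (\<lambda>w. 1 / g w) - integral {a..w0} (\<lambda>w. 1 / g w)) has_real_derivative 1 / g y) (at y)"
    using at_within_open[of y "{a<..<b}"] ab by simp
  show ?thesis
    apply (rule has_field_derivative_transform_within_open[OF d, of "{a<..<b}"])
    using ab Phi_eq[OF ab(3,4) _ ch] by (auto simp: Phi_def)
qed



lemma Psi_props:
  fixes g :: "real \<Rightarrow> real"
  assumes lr: "l < r" and cg: "continuous_on {l<..<r} g" and pos: "\<forall>x\<in>{l<..<r}. g x > 0"
    and w0: "w0 \<in> {l<..<r}"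
    and A2_left: "\<forall>v\<in>{l<..<r}. filterlim (\<lambda>a. integral {a..v} (\<lambda>w. 1 / g w)) at_top (at_right l)"
    and A2_right: "\<forall>v\<in>{l<..<r}. filterlim (\<lambda>b. integral {v..b} (\<lambda>w. 1 / g w)) at_top (at_left r)"
  shows "Phi_inv l r g w0 x \<in> {l<..<r} \<and> Phi g w0 (Phi_inv l r g w0 x) = x \<and>
     (Phi_inv l r g w0 has_real_derivative g (Phi_inv l r g w0 x)) (at x)"
proof -
  let ?P = "Phi g w0" and ?Q = "Phi_inv l r g w0"
  have der: "(?P has_real_derivative 1 / g y) (at y)" if "y \<in> {l<..<r}" for y
    using Phi_deriv[OF cg pos w0 that] .
  have mono: "?P x < ?P y" if "l < x" "x < y" "y < r" for x y
    apply (rule DERIV_pos_imp_increasing[OF that(2)])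
    using der pos that by (metis greaterThanLessThan_iff order_le_less_trans order_less_le_trans zero_less_divide_1_iff)
  have inj: "inj_on ?P {l<..<r}"
    unfolding inj_on_def by (metis greaterThanLessThan_iff linorder_neqE_linordered_idom mono order_less_irrefl)
  have surj: "c \<in> ?P ` {l<..<r}" for c
  proof -
    have "eventually (\<lambda>a. -c + 1 \<le> integral {a..w0} (\<lambda>w. 1 / g w)) (at_right l)"
      using A2_left w0 unfolding filterlim_at_top by blast
    then obtain b1 where b1: "b1 > l" "\<And>y. y > l \<Longrightarrow> y < b1 \<Longrightarrow> -c + 1 \<le> integral {y..w0} (\<lambda>w. 1 / g w)"
      unfolding eventually_at_right_field by blast
    define a where "a = (l + min b1 w0) / 2"
    have a: "l < a" "a < w0" "a < b1" using b1 w0 unfolding a_def by auto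
    have Pa: "?P a \<le> c" using b1(2)[OF a(1,3)] a(2) by (simp add: Phi_def)
    have "eventually (\<lambda>b. c \<le> integral {w0..b} (\<lambda>w. 1 / g w)) (at_left r)"
      using A2_right w0 unfolding filterlim_at_top by blast
    then obtain b2 where b2: "b2 < r" "\<And>y. y > b2 \<Longrightarrow> y < r \<Longrightarrow> c \<le> integral {w0..y} (\<lambda>w. 1 / g w)"
      unfolding eventually_at_left_field by blast
    define b where "b = (r + max b2 w0) / 2"
    have b: "b < r" "w0 < b" "b2 < b" using b2 w0 unfolding b_def by auto
    have Pb: "c \<le> ?P b" using b2(2)[OF b(3,1)] b(2) by (simp add: Phi_def)
    have cont: "continuous_on {a..b} ?P"
      apply (rule continuous_at_imp_continuous_on)
      using der a b by (meson DERIV_isCont atLeastAtMost_iff greaterThanLessThan_iff order_less_le_trans order_le_less_trans)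
    obtain x where x: "a \<le> x" "x \<le> b" "?P x = c"
      using IVT'[of ?P a c b, OF Pa Pb _ cont] a b by auto
    then show ?thesis using a b by force
  qed
  have Qin: "?Q y \<in> {l<..<r}" for y
    using surj[of y] unfolding Phi_inv_def by (rule inv_into_into)
  have PQ: "?P (?Q y) = y" for y
    using surj[of y] unfolding Phi_inv_def by (rule f_inv_into_f)
  have QP: "?Q (?P z) = z" if "z \<in> {l<..<r}" for z
    unfolding Phi_inv_def using inv_into_f_f[OF inj that] .
  have cQ: "isCont ?Q y" for y
  proof -
    define z where "z = ?Q y"
    define d where "d = min (z - l) (r - z) / 2"
    have z: "l < z" "z < r" using Qin[of y] z_def by auto
    have d: "d > 0" using z d_def by auto
    have sub: "\<bar>u - z\<bar> \<le> d \<Longrightarrow> u \<in> {l<..<r}" for u using z unfolding d_def by (simp add: abs_if split: if_splits)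
    have "isCont ?Q (?P z)"
      apply (rule isCont_inverse_function[OF d, where f="?P" and g="?Q" and x=z])
      using QP sub der DERIV_isCont by blast+
    then show ?thesis using PQ z_def by simp
  qed
  have "(?Q has_real_derivative inverse (1 / g (?Q x))) (at x)"
    apply (rule DERIV_inverse_function[where a="x-1" and b="x+1"])
    using der[OF Qin[of x]] pos Qin[of x] PQ cQ by (auto dest: bspec[of _ _ "?Q x"])
  then show ?thesis using Qin PQ by simp
qed



definition bddS :: "real set \<Rightarrow> (real \<Rightarrow> real) \<Rightarrow> bool" where
  "bddS S h \<longleftrightarrow> (\<exists>B. \<forall>y\<in>S. \<bar>h y\<bar> \<le> B)"

lemma bddS_nonneg: "bddS S h \<Longrightarrow> \<exists>B\<ge>0. \<forall>y\<in>S. \<bar>h y\<bar> \<le> B"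
  unfolding bddS_def by (meson abs_ge_zero dual_order.trans linorder_le_cases)

lemma bddS_const: "bddS S (\<lambda>y. c)"
  unfolding bddS_def by blast

lemma bddS_add: "bddS S h \<Longrightarrow> bddS S k \<Longrightarrow> bddS S (\<lambda>y. h y + k y)"
  unfolding bddS_def by (meson abs_triangle_ineq add_mono order_trans)

lemma bddS_diff: "bddS S h \<Longrightarrow> bddS S k \<Longrightarrow> bddS S (\<lambda>y. h y - k y)"
  unfolding bddS_def by (meson abs_triangle_ineq4 add_mono order_trans)

lemma bddS_mult: assumes "bddS S h" "bddS S k" shows "bddS S (\<lambda>y. h y * k y)"
proof -
  obtain A B where A: "A \<ge> 0" "\<forall>y\<in>S. \<bar>h y\<bar> \<le> A" and B: "B \<ge> 0" "\<forall>y\<in>S. \<bar>k y\<bar> \<le> B"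
    using bddS_nonneg[OF assms(1)] bddS_nonneg[OF assms(2)] by blast
  have "\<bar>h y * k y\<bar> \<le> A * B" if "y \<in> S" for y
    unfolding abs_mult using A B that by (simp add: mult_mono)
  then show ?thesis unfolding bddS_def by blast
qed

lemma bddS_divc: "bddS S h \<Longrightarrow> bddS S (\<lambda>y. h y / c)"
  using bddS_mult[of S h "\<lambda>y. 1/c"] bddS_const by simp

lemma lipschitz_deriv:
  fixes h :: "real \<Rightarrow> real"
  assumes d: "\<And>x. (h has_real_derivative h' x) (at x)" and b: "\<And>x. \<bar>h' x\<bar> \<le> C"
  shows "C-lipschitz_on UNIV h"
proof -
  have C: "0 \<le> C" using b[of 0] by linarith
  have main: "\<bar>h y - h x\<bar> \<le> C * \<bar>y - x\<bar>" if xy: "x < y" for x y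
  proof -
    obtain z where "h y - h x = (y - x) * h' z" using MVT2[OF xy, where f=h and f'=h'] d by blast
    then have "\<bar>h y - h x\<bar> = \<bar>y - x\<bar> * \<bar>h' z\<bar>" by (simp add: abs_mult)
    also have "\<dots> \<le> \<bar>y - x\<bar> * C" using b by (simp add: mult_left_mono)
    finally show ?thesis by (simp add: mult.commute)
  qed
  have "dist (h x) (h y) \<le> C * dist x y" for x y
  proof (cases x y rule: linorder_cases)
    case less then show ?thesis using main[OF less] by (simp add: dist_real_def abs_minus_commute)
  next
    case equal then show ?thesis by simp
  next
    case greater then show ?thesis using main[OF greater] by (simp add: dist_real_def)
  qed
  then show ?thesis unfolding lipschitz_on_def using C by blast
qed


theorem proposition2p2:
  fixes l r w0 :: real and f g :: "real \<Rightarrow> real"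
  assumes lr: "l < r"
    and A1: "Ck_on_closed 2 l r f"
    and A2_C3: "Ck_on_closed 3 l r g"
    and A2_pos: "\<forall>x\<in>{l<..<r}. g x > 0"
    and A2_left: "\<forall>v\<in>{l<..<r}. filterlim (\<lambda>a. integral {a..v} (\<lambda>w. 1 / g w)) at_top (at_right l)"
    and A2_right: "\<forall>v\<in>{l<..<r}. filterlim (\<lambda>b. integral {v..b} (\<lambda>w. 1 / g w)) at_top (at_left r)"
    and A3_left: "\<exists>c. ((\<lambda>x. f x / g x) \<longlongrightarrow> c) (at_right l)"
    and A3_right: "\<exists>c. ((\<lambda>x. f x / g x) \<longlongrightarrow> c) (at_left r)"
    and w0: "w0 \<in> {l<..<r}"
  shows "\<exists>LH::real. \<forall>\<mu>::real.
    (let H = (\<lambda>x. Htilde l r f g w0 x - \<mu>) in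
      (\<forall>x. H differentiable (at x)) \<and>
      (\<forall>x. deriv H differentiable (at x)) \<and>
      continuous_on UNIV (deriv (deriv H)) \<and>
      bdd_above (range (\<lambda>x. \<bar>H x + \<mu>\<bar>)) \<and>
      bdd_above (range (\<lambda>x. \<bar>deriv H x\<bar>)) \<and>
      bdd_above (range (\<lambda>x. \<bar>deriv (deriv H) x\<bar>)) \<and>
      LH = (SUP x. \<bar>H x + \<mu>\<bar>) + (SUP x. \<bar>deriv H x\<bar>) + (SUP x. \<bar>deriv (deriv H) x\<bar>) \<and>
      lipschitz_on LH UNIV H \<and>
      lipschitz_on LH UNIV (deriv H) \<and>
      (SUP x. \<bar>H x\<bar>) \<le> LH + \<bar>\<mu>\<bar>)"
  proof -
  let ?S = "{l<..<r}"
  obtain Df where Df0: "\<forall>x\<in>{l..r}. Df 0 x = f x"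
    and Dfd: "\<And>j x. j<2 \<Longrightarrow> x\<in>{l<..<r} \<Longrightarrow> (Df j has_real_derivative Df (Suc j) x) (at x)"
    and Dfc: "\<And>j. j \<le> 2 \<Longrightarrow> continuous_on {l..r} (Df j)"
    and Dfb: "\<And>j. j \<le> 2 \<Longrightarrow> \<exists>B. \<forall>x\<in>{l..r}. \<bar>Df j x\<bar> \<le> B"
    using Ck_interior[OF A1] by metis
  obtain Dg where Dg0: "\<forall>x\<in>{l..r}. Dg 0 x = g x"
    and Dgd: "\<And>j x. j<3 \<Longrightarrow> x\<in>{l<..<r} \<Longrightarrow> (Dg j has_real_derivative Dg (Suc j) x) (at x)"
    and Dgc: "\<And>j. j \<le> 3 \<Longrightarrow> continuous_on {l..r} (Dg j)"
    and Dgb: "\<And>j. j \<le> 3 \<Longrightarrow> \<exists>B. \<forall>x\<in>{l..r}. \<bar>Dg j x\<bar> \<le> B"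
    using Ck_interior[OF A2_C3] by metis
  have f0: "(Df 0 has_real_derivative Df 1 y) (at y)" if "y \<in> ?S" for y using Dfd[of 0 y] that by simp
  have f1: "(Df 1 has_real_derivative Df 2 y) (at y)" if "y \<in> ?S" for y using Dfd[of 1 y] that by (simp add: numeral_2_eq_2)
  have g0: "(Dg 0 has_real_derivative Dg 1 y) (at y)" if "y \<in> ?S" for y using Dgd[of 0 y] that by simp
  have g1: "(Dg 1 has_real_derivative Dg 2 y) (at y)" if "y \<in> ?S" for y using Dgd[of 1 y] that by (simp add: numeral_2_eq_2)
  have g2: "(Dg 2 has_real_derivative Dg 3 y) (at y)" if "y \<in> ?S" for y using Dgd[of 2 y] that by (simp add: numeral_2_eq_2 numeral_3_eq_3)
  have feq: "f y = Df 0 y" if "y \<in> ?S" for y using Df0 that by auto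
  have geq: "g y = Dg 0 y" if "y \<in> ?S" for y using Dg0 that by auto
  have gpos: "Dg 0 y > 0" if "y \<in> ?S" for y using A2_pos geq that by auto
  have cg: "continuous_on ?S g"
  proof -
    have "continuous_on {l..r} g" using continuous_on_cong[OF refl, of "{l..r}" g "Dg 0"] Dgc[of 0] Dg0 by auto
    then show ?thesis by (rule continuous_on_subset) auto
  qed
  have dg: "deriv g y = Dg 1 y" if y: "y \<in> ?S" for y
  proof -
    have "(g has_real_derivative Dg 1 y) (at y)"
      apply (rule has_field_derivative_transform_within_open[OF g0[OF y], of ?S])
      using y geq by auto
    then show ?thesis by (rule DERIV_imp_deriv)
  qed
  define \<Psi> where "\<Psi> = Phi_inv l r g w0"
  have Psi: "\<Psi> x \<in> ?S" "(\<Psi> has_real_derivative g (\<Psi> x)) (at x)" for x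
    using Psi_props[OF lr cg A2_pos w0 A2_left A2_right, of x] unfolding \<Psi>_def by auto
  define q where "q y = Df 0 y / Dg 0 y" for y
  define F where "F y = q y - Dg 1 y / 2" for y
  define K where "K y = Df 1 y - q y * Dg 1 y - Dg 0 y * Dg 2 y / 2" for y
  define M where "M y = Dg 0 y * Df 2 y - (Df 1 y - q y * Dg 1 y) * Dg 1 y - q y * Dg 0 y * Dg 2 y
      - Dg 0 y * Dg 1 y * Dg 2 y / 2 - Dg 0 y * Dg 0 y * Dg 3 y / 2" for y
  have HT: "Htilde l r f g w0 x = F (\<Psi> x)" for x
    unfolding Htilde_def \<Psi>_def[symmetric] F_def q_def
    using feq[OF Psi(1)] geq[OF Psi(1)] dg[OF Psi(1)] by simp
  have dq: "(q has_real_derivative (Df 1 y * Dg 0 y - Df 0 y * Dg 1 y) / (Dg 0 y * Dg 0 y)) (at y)"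
    if y: "y \<in> ?S" for y
    unfolding q_def[abs_def] using DERIV_divide[OF f0[OF y] g0[OF y]] y gpos[OF y] by simp
  have dF: "(F has_real_derivative K y / Dg 0 y) (at y)" if y: "y \<in> ?S" for y
  proof -
    have "(F has_real_derivative (Df 1 y * Dg 0 y - Df 0 y * Dg 1 y) / (Dg 0 y * Dg 0 y) - Dg 2 y / 2) (at y)"
      unfolding F_def[abs_def] using DERIV_diff[OF dq[OF y] DERIV_cdivide[OF g1[OF y]]] y by simp
    then show ?thesis
      apply (rule DERIV_cong)
      using gpos[OF y] by (simp add: K_def q_def field_simps)
  qed
  have dK: "(K has_real_derivative M y / Dg 0 y) (at y)" if y: "y \<in> ?S" for y
  proof -
    have "(K has_real_derivative Df 2 y - (((Df 1 y * Dg 0 y - Df 0 y * Dg 1 y) / (Dg 0 y * Dg 0 y)) * Dg 1 y + Dg 2 y * q y)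
        - (Dg 1 y * Dg 2 y + Dg 3 y * Dg 0 y) / 2) (at y)"
      unfolding K_def[abs_def]
      using DERIV_diff[OF DERIV_diff[OF f1[OF y] DERIV_mult[OF dq[OF y] g1[OF y]]]
          DERIV_cdivide[OF DERIV_mult[OF g0[OF y] g2[OF y]]]] y
      by (simp add: numeral_2_eq_2 numeral_3_eq_3)
    then show ?thesis
      apply (rule DERIV_cong)
      using gpos[OF y] by (simp add: M_def q_def field_simps)
  qed
  define Fn where "Fn x = F (\<Psi> x)" for x
  define Kn where "Kn x = K (\<Psi> x)" for x
  define Mn where "Mn x = M (\<Psi> x)" for x
  have HTf: "Htilde l r f g w0 = Fn" using HT unfolding Fn_def by auto
  have dFn: "(Fn has_real_derivative Kn x) (at x)" for x
  proof -
    have "(Fn has_real_derivative K (\<Psi> x) / Dg 0 (\<Psi> x) * g (\<Psi> x)) (at x)"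
      unfolding Fn_def[abs_def] by (rule DERIV_chain2[OF dF[OF Psi(1)] Psi(2)])
    then show ?thesis
      apply (rule DERIV_cong)
      using geq[OF Psi(1)[of x]] gpos[OF Psi(1)[of x]] by (simp add: Kn_def)
  qed
  have dKn: "(Kn has_real_derivative Mn x) (at x)" for x
  proof -
    have "(Kn has_real_derivative M (\<Psi> x) / Dg 0 (\<Psi> x) * g (\<Psi> x)) (at x)"
      unfolding Kn_def[abs_def] by (rule DERIV_chain2[OF dK[OF Psi(1)] Psi(2)])
    then show ?thesis
      apply (rule DERIV_cong)
      using geq[OF Psi(1)[of x]] gpos[OF Psi(1)[of x]] by (simp add: Mn_def)
  qed
  have cDf: "isCont (Df j) y" if "j \<le> 2" "y \<in> ?S" for j y
    using continuous_on_interior[OF Dfc[OF that(1)]] that(2) by simp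
  have cDg: "isCont (Dg j) y" if "j \<le> 3" "y \<in> ?S" for j y
    using continuous_on_interior[OF Dgc[OF that(1)]] that(2) by simp
  have cq: "isCont q y" if y: "y \<in> ?S" for y
    unfolding q_def[abs_def] using cDf[of 0 y] cDg[of 0 y] gpos[OF y] y
    by (intro continuous_intros) auto
  have cM: "isCont M y" if y: "y \<in> ?S" for y
    unfolding M_def[abs_def] using cDf[of _ y] cDg[of _ y] cq[OF y] y
    by (intro continuous_intros) auto
  have cMn: "isCont Mn x" for x
    unfolding Mn_def[abs_def] using isCont_o2[OF DERIV_isCont[OF Psi(2)] cM[OF Psi(1)]] .
  have bq: "bddS ?S q"
  proof -
    have cqS: "continuous_on ?S q" using cq by (intro continuous_at_imp_continuous_on) auto
    have ev1: "eventually (\<lambda>x. f x / g x = q x) (at_right l)"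
      unfolding eventually_at_right_field using lr feq geq q_def by auto
    have ev2: "eventually (\<lambda>x. f x / g x = q x) (at_left r)"
      unfolding eventually_at_left_field using lr feq geq q_def by auto
    obtain c1 where c1: "((\<lambda>x. f x / g x) \<longlongrightarrow> c1) (at_right l)" using A3_left by blast
    obtain c2 where c2: "((\<lambda>x. f x / g x) \<longlongrightarrow> c2) (at_left r)" using A3_right by blast
    show ?thesis unfolding bddS_def
      using bdd_open_interval[OF lr cqS, of c1 c2] c1 c2 tendsto_cong[OF ev1] tendsto_cong[OF ev2] by auto
  qed
  have bDf: "bddS ?S (Df j)" if "j \<le> 2" for j
    using Dfb[OF that] unfolding bddS_def by (meson greaterThanLessThan_subseteq_atLeastAtMost_iff order_refl subsetD)
  have bDg: "bddS ?S (Dg j)" if "j \<le> 3" for j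
    using Dgb[OF that] unfolding bddS_def by (meson greaterThanLessThan_subseteq_atLeastAtMost_iff order_refl subsetD)
  have bF: "bddS ?S F" unfolding F_def[abs_def]
    by (intro bddS_diff bddS_mult bddS_divc bddS_add bq bDf bDg) auto
  have bK: "bddS ?S K" unfolding K_def[abs_def]
    by (intro bddS_diff bddS_mult bddS_divc bddS_add bq bDf bDg) auto
  have bM: "bddS ?S M" unfolding M_def[abs_def]
    by (intro bddS_diff bddS_mult bddS_divc bddS_add bq bDf bDg) auto
  have bdn: "bdd_above (range (\<lambda>x. \<bar>P (\<Psi> x)\<bar>))" if bP: "bddS ?S P" for P
  proof -
    obtain B where B: "\<forall>y\<in>?S. \<bar>P y\<bar> \<le> B" using bP unfolding bddS_def by blast
    show ?thesis by (rule bdd_aboveI2[where M=B]) (use B Psi(1) in blast)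
  qed
  have bFn: "bdd_above (range (\<lambda>x. \<bar>Fn x\<bar>))" using bdn[OF bF] unfolding Fn_def .
  have bKn: "bdd_above (range (\<lambda>x. \<bar>Kn x\<bar>))" using bdn[OF bK] unfolding Kn_def .
  have bMn: "bdd_above (range (\<lambda>x. \<bar>Mn x\<bar>))" using bdn[OF bM] unfolding Mn_def .
  define LH where "LH = (SUP x. \<bar>Fn x\<bar>) + (SUP x. \<bar>Kn x\<bar>) + (SUP x. \<bar>Mn x\<bar>)"
  have s1: "0 \<le> (SUP x. \<bar>Fn x\<bar>)" by (rule cSUP_upper2[OF bFn, of 0]) auto
  have s2: "0 \<le> (SUP x. \<bar>Kn x\<bar>)" by (rule cSUP_upper2[OF bKn, of 0]) auto
  have s3: "0 \<le> (SUP x. \<bar>Mn x\<bar>)" by (rule cSUP_upper2[OF bMn, of 0]) auto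
  have leF: "\<bar>Fn x\<bar> \<le> (SUP x. \<bar>Fn x\<bar>)" for x by (rule cSUP_upper[OF _ bFn]) auto
  have leK: "\<bar>Kn x\<bar> \<le> LH" for x
    using cSUP_upper[OF _ bKn, of x] s1 s3 unfolding LH_def by auto
  have leM: "\<bar>Mn x\<bar> \<le> LH" for x
    using cSUP_upper[OF _ bMn, of x] s1 s2 unfolding LH_def by auto
  show ?thesis
  proof (intro exI allI)
    fix \<mu> :: real
    have dH: "((\<lambda>x. Fn x - \<mu>) has_real_derivative Kn x) (at x)" for x
      using DERIV_diff[OF dFn DERIV_const[of \<mu>]] by simp
    have dHe: "deriv (\<lambda>x. Fn x - \<mu>) = Kn"
      using dH DERIV_imp_deriv by blast
    have ddH: "deriv Kn = Mn" using dKn DERIV_imp_deriv by blast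
    have supH: "(SUP x. \<bar>Fn x - \<mu>\<bar>) \<le> LH + \<bar>\<mu>\<bar>"
    proof (rule cSUP_least)
      fix x
      have "\<bar>Fn x - \<mu>\<bar> \<le> \<bar>Fn x\<bar> + \<bar>\<mu>\<bar>" by (rule abs_triangle_ineq4)
      also have "\<dots> \<le> LH + \<bar>\<mu>\<bar>" using leF[of x] s2 s3 unfolding LH_def by auto
      finally show "\<bar>Fn x - \<mu>\<bar> \<le> LH + \<bar>\<mu>\<bar>" .
    qed auto
    show "let H = (\<lambda>x. Htilde l r f g w0 x - \<mu>) in
      (\<forall>x. H differentiable (at x)) \<and>
      (\<forall>x. deriv H differentiable (at x)) \<and>
      continuous_on UNIV (deriv (deriv H)) \<and>
      bdd_above (range (\<lambda>x. \<bar>H x + \<mu>\<bar>)) \<and>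
      bdd_above (range (\<lambda>x. \<bar>deriv H x\<bar>)) \<and>
      bdd_above (range (\<lambda>x. \<bar>deriv (deriv H) x\<bar>)) \<and>
      LH = (SUP x. \<bar>H x + \<mu>\<bar>) + (SUP x. \<bar>deriv H x\<bar>) + (SUP x. \<bar>deriv (deriv H) x\<bar>) \<and>
      lipschitz_on LH UNIV H \<and>
      lipschitz_on LH UNIV (deriv H) \<and>
      (SUP x. \<bar>H x\<bar>) \<le> LH + \<bar>\<mu>\<bar>"
      unfolding Let_def HTf dHe ddH
    proof (intro conjI allI)
      show "(\<lambda>x. Fn x - \<mu>) differentiable (at x)" for x
        using dH real_differentiable_def by blast
      show "Kn differentiable (at x)" for x
        using dKn real_differentiable_def by blast
      show "continuous_on UNIV Mn" using cMn by (intro continuous_at_imp_continuous_on) auto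
      show "bdd_above (range (\<lambda>x. \<bar>Fn x - \<mu> + \<mu>\<bar>))" using bFn by simp
      show "bdd_above (range (\<lambda>x. \<bar>Kn x\<bar>))" by (rule bKn)
      show "bdd_above (range (\<lambda>x. \<bar>Mn x\<bar>))" by (rule bMn)
      show "LH = (SUP x. \<bar>Fn x - \<mu> + \<mu>\<bar>) + (SUP x. \<bar>Kn x\<bar>) + (SUP x. \<bar>Mn x\<bar>)"
        unfolding LH_def by simp
      show "LH-lipschitz_on UNIV (\<lambda>x. Fn x - \<mu>)" by (rule lipschitz_deriv[OF dH leK])
      show "LH-lipschitz_on UNIV Kn" by (rule lipschitz_deriv[OF dKn leM])
      show "(SUP x. \<bar>Fn x - \<mu>\<bar>) \<le> LH + \<bar>\<mu>\<bar>" by (rule supH)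
    qed
  qed
qed


end
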